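(* Let $G$ be a group with finite generating set $\mathcal G$, and suppose that the Cayley graph of $G$ with respect to $\mathcal G$ has property $L_\delta$ for some $\delta\ge 0$. Then $G$ is almost convex with respect to $\mathcal G$ with constant $3\delta+2$: for every integer $n\ge 0$ and every two vertices $g,g'$ of the Cayley graph with $d(1,g)=d(1,g')=n$ and $d(g,g')\le 2$, there is a path in the Cayley graph from $g$ to $g'$ of length at most $3\delta+2$ that lies entirely in the closed ball of radius $n$ about the identity vertex $1$.
   Context: The Cayley graph of $G$ with respect to $\mathcal G$ is regarded as a geodesic metric space in which each edge is isometric to the unit interval; points of this space may lie in the interiors of edges, and $d$ denotes the resulting path metric (extending the word metric on vertices). The closed ball of radius $n$ is the set of points at distance at most $n$ from the identity vertex. For $\delta\ge 0$, a finite sequence of points $(x_1,\dots,x_n)$ is a $\delta$-path if $d(x_1,x_2)+\dots+d(x_{n-1},x_n)\le d(x_1,x_n)+\delta$. The space has property $L_\delta$ if for every three distinct points $x,y,z$ there exists a point $t$ such that $(x,t,y)$, $(y,t,z)$ and $(z,t,x)$ are all $\delta$-paths. *)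

theory Defs
  imports Complex_Main "HOL-Algebra.Algebra"
begin

definition cay_vdist :: "('a, 'b) monoid_scheme \<Rightarrow> 'a set \<Rightarrow> 'a \<Rightarrow> 'a \<Rightarrow> real" where
  "cay_vdist G S g h = real (LEAST n. \<exists>ss. set ss \<subseteq> S \<union> (\<lambda>s. inv\<^bsub>G\<^esub> s) ` S \<and> length ss = n
      \<and> g \<otimes>\<^bsub>G\<^esub> foldr (\<lambda>s x. s \<otimes>\<^bsub>G\<^esub> x) ss \<one>\<^bsub>G\<^esub> = h)"

definition cay_edges :: "('a, 'b) monoid_scheme \<Rightarrow> 'a set \<Rightarrow> 'a set set" where
  "cay_edges G S = {{g, g \<otimes>\<^bsub>G\<^esub> s} | g s. g \<in> carrier G \<and> s \<in> S \<and> g \<otimes>\<^bsub>G\<^esub> s \<noteq> g}"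

text \<open>A point is encoded canonically by the partial map sending each vertex of the
  closed cell containing it (in its interior) to the distance from that vertex:
  a vertex g is [g \<mapsto> 0]; the point of edge {u,v} at distance t from u (0<t<1)
  is [u \<mapsto> t, v \<mapsto> 1-t].\<close>
definition cay_points :: "('a, 'b) monoid_scheme \<Rightarrow> 'a set \<Rightarrow> ('a \<Rightarrow> real option) set" where
  "cay_points G S =
     {[g \<mapsto> 0] | g. g \<in> carrier G}
   \<union> {[u \<mapsto> t, v \<mapsto> 1 - t] | u v t. {u, v} \<in> cay_edges G S \<and> u \<noteq> v \<and> 0 < t \<and> t < 1}"

abbreviation cay_vertex :: "'a \<Rightarrow> ('a \<Rightarrow> real option)" where
  "cay_vertex g \<equiv> [g \<mapsto> 0]"

text \<open>The path metric of the geometric realisation: either travel inside the common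
  cell, or leave through an endpoint a of p's cell, go along a geodesic of vertices to an
  endpoint b of q's cell, and enter q's cell.\<close>
definition cay_dist :: "('a, 'b) monoid_scheme \<Rightarrow> 'a set \<Rightarrow>
    ('a \<Rightarrow> real option) \<Rightarrow> ('a \<Rightarrow> real option) \<Rightarrow> real" where
  "cay_dist G S p q = Min
     ({\<bar>the (p a) - the (q a)\<bar> | a. dom p = dom q \<and> a \<in> dom p}
    \<union> {the (p a) + cay_vdist G S a b + the (q b) | a b. a \<in> dom p \<and> b \<in> dom q})"

definition delta_path3 :: "('a, 'b) monoid_scheme \<Rightarrow> 'a set \<Rightarrow> real \<Rightarrow>
    ('a \<Rightarrow> real option) \<Rightarrow> ('a \<Rightarrow> real option) \<Rightarrow> ('a \<Rightarrow> real option) \<Rightarrow> bool" where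
  "delta_path3 G S \<delta> x t y \<longleftrightarrow> cay_dist G S x t + cay_dist G S t y \<le> cay_dist G S x y + \<delta>"

definition property_L :: "('a, 'b) monoid_scheme \<Rightarrow> 'a set \<Rightarrow> real \<Rightarrow> bool" where
  "property_L G S \<delta> \<longleftrightarrow>
     (\<forall>x\<in>cay_points G S. \<forall>y\<in>cay_points G S. \<forall>z\<in>cay_points G S.
        x \<noteq> y \<and> y \<noteq> z \<and> x \<noteq> z \<longrightarrow>
        (\<exists>t\<in>cay_points G S. delta_path3 G S \<delta> x t y \<and> delta_path3 G S \<delta> y t z
                             \<and> delta_path3 G S \<delta> z t x))"

definition cay_ball :: "('a, 'b) monoid_scheme \<Rightarrow> 'a set \<Rightarrow> real \<Rightarrow> ('a \<Rightarrow> real option) set" where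
  "cay_ball G S r = {p \<in> cay_points G S. cay_dist G S (cay_vertex \<one>\<^bsub>G\<^esub>) p \<le> r}"

definition cay_edge_path :: "('a, 'b) monoid_scheme \<Rightarrow> 'a set \<Rightarrow> 'a list \<Rightarrow> bool" where
  "cay_edge_path G S vs \<longleftrightarrow> vs \<noteq> [] \<and> set vs \<subseteq> carrier G \<and>
     (\<forall>i. Suc i < length vs \<longrightarrow> {vs ! i, vs ! Suc i} \<in> cay_edges G S)"

definition cay_path_points :: "('a, 'b) monoid_scheme \<Rightarrow> 'a set \<Rightarrow> 'a list \<Rightarrow> ('a \<Rightarrow> real option) set" where
  "cay_path_points G S vs =
     {p \<in> cay_points G S. (\<exists>v \<in> set vs. dom p = {v})
        \<or> (\<exists>i. Suc i < length vs \<and> dom p = {vs ! i, vs ! Suc i})}"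

end

theory Submission
  imports Defs
begin

locale cay = group G for G (structure) +
  fixes S :: "'a set"
  assumes S_sub: "S \<subseteq> carrier G" and S_gen: "generate G S = carrier G"
begin

definition LL where "LL = S \<union> (\<lambda>s. inv s) ` S"
definition wv :: "'a list \<Rightarrow> 'a" where "wv ss = foldr (\<lambda>s x. s \<otimes> x) ss \<one>"
definition wrd where "wrd g h n \<longleftrightarrow> (\<exists>ss. set ss \<subseteq> LL \<and> length ss = n \<and> g \<otimes> wv ss = h)"
definition W where "W g h = (LEAST n. wrd g h n)"

lemma vdist_W: "cay_vdist G S g h = real (W g h)"
  unfolding cay_vdist_def W_def wrd_def LL_def wv_def by simp

lemma LL_carrier: "LL \<subseteq> carrier G"
  using S_sub unfolding LL_def by auto

lemma wv_closed: "set ss \<subseteq> LL \<Longrightarrow> wv ss \<in> carrier G"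
  using LL_carrier by (induction ss) (auto simp: wv_def)

lemma wv_Nil[simp]: "wv [] = \<one>" by (simp add: wv_def)
lemma wv_Cons[simp]: "wv (s # ss) = s \<otimes> wv ss" by (simp add: wv_def)

lemma wv_append: "set xs \<subseteq> LL \<Longrightarrow> set ys \<subseteq> LL \<Longrightarrow> wv (xs @ ys) = wv xs \<otimes> wv ys"
proof (induction xs)
  case Nil then show ?case using wv_closed by simp
next
  case (Cons x xs)
  then have "x \<in> carrier G" using LL_carrier by auto
  with Cons show ?case using wv_closed by (simp add: m_assoc)
qed

lemma inv_LL: "s \<in> LL \<Longrightarrow> inv s \<in> LL"
  using S_sub unfolding LL_def by auto

lemma wv_rev_inv: "set ss \<subseteq> LL \<Longrightarrow> wv (rev (map (\<lambda>s. inv s) ss)) = inv (wv ss)"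
proof (induction ss)
  case Nil then show ?case by simp
next
  case (Cons x xs)
  have x: "x \<in> carrier G" using Cons LL_carrier by auto
  have s1: "set (rev (map (\<lambda>s. inv s) xs)) \<subseteq> LL" using Cons inv_LL by auto
  have s2: "set [inv x] \<subseteq> LL" using Cons inv_LL by auto
  have "wv (rev (map (\<lambda>s. inv s) (x # xs))) = wv (rev (map (\<lambda>s. inv s) xs) @ [inv x])" by simp
  also have "\<dots> = wv (rev (map (\<lambda>s. inv s) xs)) \<otimes> wv [inv x]" using wv_append[OF s1 s2] .
  also have "\<dots> = inv (wv xs) \<otimes> inv x" using Cons.IH Cons.prems x by simp
  also have "\<dots> = inv (x \<otimes> wv xs)" using x wv_closed[of xs] Cons.prems by (intro inv_mult_group[symmetric]) auto
  finally show ?case by (simp only: wv_Cons)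
qed

lemma gen_word: "x \<in> generate G S \<Longrightarrow> \<exists>ss. set ss \<subseteq> LL \<and> wv ss = x"
proof (induction rule: generate.induct)
  case one then show ?case by (intro exI[of _ "[]"]) simp
next
  case (incl h) then show ?case using S_sub by (intro exI[of _ "[h]"]) (auto simp: LL_def)
next
  case (inv h) then show ?case using S_sub by (intro exI[of _ "[inv h]"]) (auto simp: LL_def)
next
  case (eng h1 h2)
  then obtain s1 s2 where "set s1 \<subseteq> LL" "wv s1 = h1" "set s2 \<subseteq> LL" "wv s2 = h2" by blast
  then show ?case by (intro exI[of _ "s1 @ s2"]) (simp add: wv_append)
qed

lemma wrd_ex: assumes "g \<in> carrier G" "h \<in> carrier G" shows "\<exists>n. wrd g h n"
proof -
  have "inv g \<otimes> h \<in> generate G S" using S_gen assms by simp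
  then obtain ss where ss: "set ss \<subseteq> LL" "wv ss = inv g \<otimes> h" using gen_word by blast
  then have "g \<otimes> wv ss = h" using assms by (simp add: m_assoc[symmetric])
  then show ?thesis using ss unfolding wrd_def by blast
qed

lemma W_wrd: assumes "g \<in> carrier G" "h \<in> carrier G" shows "wrd g h (W g h)"
  unfolding W_def using wrd_ex[OF assms] by (rule LeastI_ex)

lemma W_le: "wrd g h n \<Longrightarrow> W g h \<le> n"
  unfolding W_def by (rule Least_le)

lemma W_refl[simp]: "g \<in> carrier G \<Longrightarrow> W g g = 0"
proof -
  assume "g \<in> carrier G"
  then have "wrd g g 0" unfolding wrd_def by (intro exI[of _ "[]"]) simp
  then show ?thesis using W_le by fastforce
qed

lemma W_zero: assumes "g \<in> carrier G" "h \<in> carrier G" "W g h = 0" shows "g = h"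
  using W_wrd[OF assms(1,2)] assms unfolding wrd_def by auto

lemma W_sym_le: assumes "g \<in> carrier G" "h \<in> carrier G" shows "W h g \<le> W g h"
proof -
  obtain ss where ss: "set ss \<subseteq> LL" "length ss = W g h" "g \<otimes> wv ss = h"
    using W_wrd[OF assms] unfolding wrd_def by blast
  have c: "wv ss \<in> carrier G" using wv_closed ss by auto
  have "h \<otimes> inv (wv ss) = g"
    using ss(3)[symmetric] c assms by (simp add: m_assoc)
  then have "h \<otimes> wv (rev (map (\<lambda>s. inv s) ss)) = g"
    using wv_rev_inv[OF ss(1)] by simp
  moreover have "set (rev (map (\<lambda>s. inv s) ss)) \<subseteq> LL" using ss inv_LL by auto
  ultimately have "wrd h g (W g h)" unfolding wrd_def using ss by (intro exI[of _ "rev (map (\<lambda>s. inv s) ss)"]) auto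
  then show ?thesis by (rule W_le)
qed

lemma W_sym: "g \<in> carrier G \<Longrightarrow> h \<in> carrier G \<Longrightarrow> W g h = W h g"
  using W_sym_le by (simp add: le_antisym)

lemma W_tri: assumes "a \<in> carrier G" "b \<in> carrier G" "c \<in> carrier G" shows "W a c \<le> W a b + W b c"
proof -
  obtain s1 where s1: "set s1 \<subseteq> LL" "length s1 = W a b" "a \<otimes> wv s1 = b"
    using W_wrd[OF assms(1,2)] unfolding wrd_def by blast
  obtain s2 where s2: "set s2 \<subseteq> LL" "length s2 = W b c" "b \<otimes> wv s2 = c"
    using W_wrd[OF assms(2,3)] unfolding wrd_def by blast
  have "a \<otimes> wv (s1 @ s2) = c" using s1 s2 assms wv_closed
    by (simp add: wv_append m_assoc[symmetric])
  then have "wrd a c (W a b + W b c)" unfolding wrd_def using s1 s2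
    by (intro exI[of _ "s1 @ s2"]) auto
  then show ?thesis by (rule W_le)
qed

lemma edgeI: "g \<in> carrier G \<Longrightarrow> s \<in> S \<Longrightarrow> g \<otimes> s \<noteq> g \<Longrightarrow> {g, g \<otimes> s} \<in> cay_edges G S"
  unfolding cay_edges_def by blast

lemma W_one_edge: assumes "u \<in> carrier G" "v \<in> carrier G" "W u v = 1" shows "{u, v} \<in> cay_edges G S"
proof -
  obtain ss where ss: "set ss \<subseteq> LL" "length ss = 1" "u \<otimes> wv ss = v"
    using W_wrd[OF assms(1,2)] assms(3) unfolding wrd_def by auto
  then obtain s where s: "ss = [s]" by (cases ss) auto
  have uv: "u \<noteq> v" using assms W_refl by auto
  from ss s have "s \<in> LL" by auto
  then have "v = u \<otimes> s" using ss s LL_carrier by auto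
  from \<open>s \<in> LL\<close> consider (a) "s \<in> S" | (b) s' where "s' \<in> S" "s = inv s'" unfolding LL_def by auto
  then show ?thesis
  proof cases
    case a then show ?thesis using assms uv \<open>v = u \<otimes> s\<close> edgeI[of u s] by simp
  next
    case b
    have s': "s' \<in> carrier G" using b S_sub by auto
    have "v \<otimes> s' = u" using \<open>v = u \<otimes> s\<close> b s' assms by (simp add: m_assoc)
    have "{u, v} = {v, v \<otimes> s'}" using \<open>v \<otimes> s' = u\<close> by auto
    moreover have "v \<otimes> s' \<noteq> v" using \<open>v \<otimes> s' = u\<close> uv by simp
    ultimately show ?thesis using assms b edgeI[of v s'] by simp
  qed
qed

lemma edge_W: assumes "{u, v} \<in> cay_edges G S" "u \<noteq> v" shows "W u v = 1" "u \<in> carrier G" "v \<in> carrier G"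
proof -
  obtain g s where gs: "{u, v} = {g, g \<otimes> s}" "g \<in> carrier G" "s \<in> S" "g \<otimes> s \<noteq> g"
    using assms(1) unfolding cay_edges_def by blast
  have s: "s \<in> carrier G" using gs S_sub by auto
  have w1: "W g (g \<otimes> s) \<le> 1"
    by (rule W_le) (use gs s in \<open>auto simp: wrd_def LL_def intro!: exI[of _ "[s]"]\<close>)
  have c: "g \<otimes> s \<in> carrier G" using gs s by auto
  have w0: "W g (g \<otimes> s) \<noteq> 0" using W_zero[OF gs(2) c] gs by auto
  have "W g (g \<otimes> s) = 1" using w1 w0 by simp
  moreover have "W (g \<otimes> s) g = 1" using calculation W_sym[OF gs(2) c] by simp
  ultimately show "W u v = 1" "u \<in> carrier G" "v \<in> carrier G" using gs c assms(2)
    unfolding doubleton_eq_iff by auto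
qed

end

context cay begin

lemma pt_cases:
  assumes "p \<in> cay_points G S"
  shows "(\<exists>u. u \<in> carrier G \<and> p = [u \<mapsto> 0]) \<or>
         (\<exists>u v s. u \<noteq> v \<and> u \<in> carrier G \<and> v \<in> carrier G \<and> W u v = 1 \<and> 0 < s \<and> s < 1
                 \<and> p = [u \<mapsto> s, v \<mapsto> 1 - s])"
proof -
  from assms consider (a) u where "u \<in> carrier G" "p = [u \<mapsto> 0]"
    | (b) u v t where "{u, v} \<in> cay_edges G S" "u \<noteq> v" "0 < t" "t < 1" "p = [u \<mapsto> t, v \<mapsto> 1 - t]"
    unfolding cay_points_def by blast
  then show ?thesis
  proof cases
    case a then show ?thesis by blast
  next
    case b
    then have "W u v = 1" "u \<in> carrier G" "v \<in> carrier G" using edge_W by auto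
    then show ?thesis using b by blast
  qed
qed

lemma pt_basic:
  assumes "p \<in> cay_points G S"
  shows "dom p \<subseteq> carrier G" "finite (dom p)" "dom p \<noteq> {}"
    "\<And>c. c \<in> dom p \<Longrightarrow> the (p c) \<ge> 0"
    "\<And>c c'. c \<in> dom p \<Longrightarrow> c' \<in> dom p \<Longrightarrow> c \<noteq> c' \<Longrightarrow>
        W c c' = 1 \<and> the (p c) + the (p c') = 1 \<and> dom p = {c, c'}"
    "\<And>c. dom p = {c} \<Longrightarrow> the (p c) = 0"
proof -
  from pt_cases[OF assms] consider (a) u where "u \<in> carrier G" "p = [u \<mapsto> 0]"
    | (b) u v s where "u \<noteq> v" "u \<in> carrier G" "v \<in> carrier G" "W u v = 1" "0 < s" "s < 1"
                 "p = [u \<mapsto> s, v \<mapsto> 1 - s]" by blast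
  note cs = this
  show "dom p \<subseteq> carrier G" by (cases rule: cs) auto
  show "finite (dom p)" by (cases rule: cs) auto
  show "dom p \<noteq> {}" by (cases rule: cs) auto
  show "\<And>c. c \<in> dom p \<Longrightarrow> the (p c) \<ge> 0" by (cases rule: cs) auto
  show "\<And>c. dom p = {c} \<Longrightarrow> the (p c) = 0"
  proof (cases rule: cs)
    case (a u) then show "\<And>c. dom p = {c} \<Longrightarrow> the (p c) = 0" by auto
  next
    case (b u v s)
    then show "\<And>c. dom p = {c} \<Longrightarrow> the (p c) = 0" by (auto simp: doubleton_eq_iff)
  qed
  show "\<And>c c'. c \<in> dom p \<Longrightarrow> c' \<in> dom p \<Longrightarrow> c \<noteq> c' \<Longrightarrow>
        W c c' = 1 \<and> the (p c) + the (p c') = 1 \<and> dom p = {c, c'}"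
  proof (cases rule: cs)
    case (a u) then show "\<And>c c'. c \<in> dom p \<Longrightarrow> c' \<in> dom p \<Longrightarrow> c \<noteq> c' \<Longrightarrow>
        W c c' = 1 \<and> the (p c) + the (p c') = 1 \<and> dom p = {c, c'}" by auto
  next
    case (b u v s)
    have "W v u = 1" using b W_sym by simp
    then show "\<And>c c'. c \<in> dom p \<Longrightarrow> c' \<in> dom p \<Longrightarrow> c \<noteq> c' \<Longrightarrow>
        W c c' = 1 \<and> the (p c) + the (p c') = 1 \<and> dom p = {c, c'}" using b by auto
  qed
qed

lemma pt_anch:
  assumes "p \<in> cay_points G S" "c \<in> dom p" "c' \<in> dom p"
  shows "real (W c c') \<le> the (p c) + the (p c')"
proof (cases "c = c'")
  case True
  have "c \<in> carrier G" using pt_basic(1)[OF assms(1)] assms by auto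
  then show ?thesis using True pt_basic(4)[OF assms(1,2)] by simp
next
  case False
  then show ?thesis using pt_basic(5)[OF assms(1,2,3)] by simp
qed

definition Aset where "Aset p q = {\<bar>the (p a) - the (q a)\<bar> | a. dom p = dom q \<and> a \<in> dom p}"
definition Bset where "Bset p q = {the (p a) + real (W a b) + the (q b) | a b. a \<in> dom p \<and> b \<in> dom q}"

lemma dist_eq: "cay_dist G S p q = Min (Aset p q \<union> Bset p q)"
  unfolding cay_dist_def Aset_def Bset_def vdist_W ..

lemma AB_fin:
  assumes "p \<in> cay_points G S" "q \<in> cay_points G S"
  shows "finite (Aset p q \<union> Bset p q)" "Aset p q \<union> Bset p q \<noteq> {}"
proof -
  have "Aset p q \<subseteq> (\<lambda>a. \<bar>the (p a) - the (q a)\<bar>) ` dom p" unfolding Aset_def by auto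
  moreover have "Bset p q \<subseteq> (\<lambda>(a,b). the (p a) + real (W a b) + the (q b)) ` (dom p \<times> dom q)"
    unfolding Bset_def by auto
  ultimately show "finite (Aset p q \<union> Bset p q)"
    using pt_basic(2)[OF assms(1)] pt_basic(2)[OF assms(2)] by (meson finite_SigmaI finite_Un finite_imageI finite_subset)
  obtain a b where "a \<in> dom p" "b \<in> dom q" using pt_basic(3)[OF assms(1)] pt_basic(3)[OF assms(2)] by blast
  then have "Bset p q \<noteq> {}" unfolding Bset_def by blast
  then show "Aset p q \<union> Bset p q \<noteq> {}" by blast
qed

lemma dist_UB:
  assumes "p \<in> cay_points G S" "q \<in> cay_points G S" "a \<in> dom p" "b \<in> dom q"
  shows "cay_dist G S p q \<le> the (p a) + real (W a b) + the (q b)"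
proof -
  have "the (p a) + real (W a b) + the (q b) \<in> Aset p q \<union> Bset p q" unfolding Bset_def using assms by blast
  then show ?thesis unfolding dist_eq using AB_fin[OF assms(1,2)] by simp
qed

lemma dist_UB_same:
  assumes "p \<in> cay_points G S" "q \<in> cay_points G S" "dom p = dom q" "a \<in> dom p"
  shows "cay_dist G S p q \<le> \<bar>the (p a) - the (q a)\<bar>"
proof -
  have "\<bar>the (p a) - the (q a)\<bar> \<in> Aset p q \<union> Bset p q" unfolding Aset_def using assms by blast
  then show ?thesis unfolding dist_eq using AB_fin[OF assms(1,2)] by simp
qed

lemma dist_MIN:
  assumes "p \<in> cay_points G S" "q \<in> cay_points G S"
  shows "(\<exists>a. dom p = dom q \<and> a \<in> dom p \<and> cay_dist G S p q = \<bar>the (p a) - the (q a)\<bar>) \<or>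
         (\<exists>a b. a \<in> dom p \<and> b \<in> dom q \<and> cay_dist G S p q = the (p a) + real (W a b) + the (q b))"
proof -
  have "cay_dist G S p q \<in> Aset p q \<union> Bset p q" unfolding dist_eq using AB_fin[OF assms] by (rule Min_in)
  then show ?thesis unfolding Aset_def Bset_def by blast
qed

lemma dist_AN:
  assumes p: "p \<in> cay_points G S" and q: "q \<in> cay_points G S" and a: "a \<in> dom p" and c: "c \<in> dom q"
  shows "real (W a c) \<le> the (p a) + cay_dist G S p q + the (q c)"
  using dist_MIN[OF p q]
proof
  assume "\<exists>e. dom p = dom q \<and> e \<in> dom p \<and> cay_dist G S p q = \<bar>the (p e) - the (q e)\<bar>"
  then obtain e where e: "dom p = dom q" "e \<in> dom p" "cay_dist G S p q = \<bar>the (p e) - the (q e)\<bar>" by blast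
  show ?thesis
  proof (cases "a = c")
    case True
    then show ?thesis using pt_basic(4)[OF p a] pt_basic(4)[OF q c] pt_basic(1)[OF p] a e by auto
  next
    case False
    have c': "c \<in> dom p" using c e by simp
    have a': "a \<in> dom q" using a e by simp
    from pt_basic(5)[OF p a c' False] pt_basic(5)[OF q a' c False]
    have h: "W a c = 1" "the (p a) + the (p c) = 1" "dom p = {a, c}" "the (q a) + the (q c) = 1" by auto
    have "e = a \<or> e = c" using h(3) e(2) by auto
    then show ?thesis using h e(3) by auto
  qed
next
  assume "\<exists>a' b'. a' \<in> dom p \<and> b' \<in> dom q \<and> cay_dist G S p q = the (p a') + real (W a' b') + the (q b')"
  then obtain a' b' where ab: "a' \<in> dom p" "b' \<in> dom q" "cay_dist G S p q = the (p a') + real (W a' b') + the (q b')" by blast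
  have cr: "a \<in> carrier G" "a' \<in> carrier G" "b' \<in> carrier G" "c \<in> carrier G"
    using pt_basic(1)[OF p] pt_basic(1)[OF q] a c ab by auto
  have "W a c \<le> W a a' + W a' b' + W b' c" using W_tri cr by (meson add_mono_thms_linordered_semiring(3) le_trans)
  moreover have "real (W a a') \<le> the (p a) + the (p a')" using pt_anch[OF p a ab(1)] .
  moreover have "real (W b' c) \<le> the (q b') + the (q c)" using pt_anch[OF q ab(2) c] .
  ultimately show ?thesis using ab(3) by linarith
qed

lemma dist_nonneg:
  assumes "p \<in> cay_points G S" "q \<in> cay_points G S"
  shows "cay_dist G S p q \<ge> 0"
  using dist_MIN[OF assms] pt_basic(4)[OF assms(1)] pt_basic(4)[OF assms(2)]
  by (smt (verit, best) of_nat_0_le_iff)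

lemma dist_self:
  assumes "p \<in> cay_points G S" shows "cay_dist G S p p = 0"
proof -
  obtain a where "a \<in> dom p" using pt_basic(3)[OF assms] by blast
  then have "cay_dist G S p p \<le> 0" using dist_UB_same[OF assms assms] by fastforce
  then show ?thesis using dist_nonneg[OF assms assms] by simp
qed

lemma dist_sym_le:
  assumes p: "p \<in> cay_points G S" and q: "q \<in> cay_points G S"
  shows "cay_dist G S q p \<le> cay_dist G S p q"
  using dist_MIN[OF p q]
proof
  assume "\<exists>e. dom p = dom q \<and> e \<in> dom p \<and> cay_dist G S p q = \<bar>the (p e) - the (q e)\<bar>"
  then obtain e where e: "dom p = dom q" "e \<in> dom p" "cay_dist G S p q = \<bar>the (p e) - the (q e)\<bar>" by blast
  have "cay_dist G S q p \<le> \<bar>the (q e) - the (p e)\<bar>" using dist_UB_same[OF q p] e by simp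
  then show ?thesis using e by (simp add: abs_minus_commute)
next
  assume "\<exists>a' b'. a' \<in> dom p \<and> b' \<in> dom q \<and> cay_dist G S p q = the (p a') + real (W a' b') + the (q b')"
  then obtain a' b' where ab: "a' \<in> dom p" "b' \<in> dom q" "cay_dist G S p q = the (p a') + real (W a' b') + the (q b')" by blast
  have "W b' a' = W a' b'" using W_sym pt_basic(1)[OF p] pt_basic(1)[OF q] ab by blast
  then show ?thesis using dist_UB[OF q p ab(2) ab(1)] ab(3) by simp
qed

lemma dist_sym:
  assumes "p \<in> cay_points G S" "q \<in> cay_points G S"
  shows "cay_dist G S p q = cay_dist G S q p"
  using dist_sym_le[OF assms] dist_sym_le[OF assms(2,1)] by simp

lemma vtx_pt: "u \<in> carrier G \<Longrightarrow> [u \<mapsto> 0] \<in> cay_points G S"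
  unfolding cay_points_def by blast

lemma dist_vv:
  assumes "u \<in> carrier G" "v \<in> carrier G"
  shows "cay_dist G S [u \<mapsto> 0] [v \<mapsto> 0] = real (W u v)"
  using dist_UB[OF vtx_pt[OF assms(1)] vtx_pt[OF assms(2)], of u v]
    dist_AN[OF vtx_pt[OF assms(1)] vtx_pt[OF assms(2)], of u v] by simp

end

context cay begin

lemma pt_pos:
  assumes "p \<in> cay_points G S" "c \<in> dom p" "c' \<in> dom p" "c \<noteq> c'"
  shows "the (p c) > 0"
proof -
  from pt_cases[OF assms(1)] consider (a) u where "u \<in> carrier G" "p = [u \<mapsto> 0]"
    | (b) u v s where "u \<noteq> v" "0 < s" "s < 1" "p = [u \<mapsto> s, v \<mapsto> 1 - s]" by blast
  then show ?thesis
  proof cases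
    case a then show ?thesis using assms by auto
  next
    case b then show ?thesis using assms by (auto split: if_splits)
  qed
qed

definition goodp :: "nat \<Rightarrow> (nat \<Rightarrow> 'a) \<Rightarrow> nat \<Rightarrow> bool" where
  "goodp n f L \<longleftrightarrow> (\<forall>i \<le> L. f i \<in> carrier G \<and> W \<one> (f i) \<le> n) \<and>
     (\<forall>i < L. W (f i) (f (Suc i)) = 1 \<and> W \<one> (f i) + W \<one> (f (Suc i)) + 1 \<le> 2 * n)"

lemma goodpI:
  assumes "\<And>i. i \<le> L \<Longrightarrow> f i \<in> carrier G \<and> W \<one> (f i) \<le> n"
    and "\<And>i. i < L \<Longrightarrow> W (f i) (f (Suc i)) = 1 \<and> W \<one> (f i) + W \<one> (f (Suc i)) + 1 \<le> 2 * n"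
  shows "goodp n f L"
  using assms unfolding goodp_def by blast

lemma goodp_concat:
  assumes P: "goodp n P l" and Q: "goodp n Q r" and e: "P l = Q 0"
  shows "goodp n (\<lambda>i. if i \<le> l then P i else Q (i - l)) (l + r)"
proof (rule goodpI)
  fix i assume i: "i \<le> l + r"
  show "(if i \<le> l then P i else Q (i - l)) \<in> carrier G \<and> W \<one> (if i \<le> l then P i else Q (i - l)) \<le> n"
    using P Q i unfolding goodp_def by auto
next
  fix i assume i: "i < l + r"
  show "W (if i \<le> l then P i else Q (i - l)) (if Suc i \<le> l then P (Suc i) else Q (Suc i - l)) = 1 \<and>
        W \<one> (if i \<le> l then P i else Q (i - l)) + W \<one> (if Suc i \<le> l then P (Suc i) else Q (Suc i - l)) + 1 \<le> 2 * n"
  proof (cases "i < l")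
    case True then show ?thesis using P unfolding goodp_def by auto
  next
    case False
    then have "i - l < r" "Suc i - l = Suc (i - l)" using i by auto
    moreover have "(if i \<le> l then P i else Q (i - l)) = Q (i - l)" using False e by auto
    ultimately show ?thesis using Q False unfolding goodp_def by auto
  qed
qed

lemma goodp_rev:
  assumes Q: "goodp n Q r"
  shows "goodp n (\<lambda>i. Q (r - i)) r"
proof (rule goodpI)
  fix i assume "i \<le> r" then show "Q (r - i) \<in> carrier G \<and> W \<one> (Q (r - i)) \<le> n" using Q unfolding goodp_def by auto
next
  fix i assume i: "i < r"
  define j where "j = r - Suc i"
  have j: "j < r" "r - i = Suc j" "r - Suc i = j" using i unfolding j_def by auto
  have c: "Q j \<in> carrier G" "Q (Suc j) \<in> carrier G" using Q j unfolding goodp_def by auto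
  show "W (Q (r - i)) (Q (r - Suc i)) = 1 \<and> W \<one> (Q (r - i)) + W \<one> (Q (r - Suc i)) + 1 \<le> 2 * n"
    using Q j W_sym[OF c] unfolding goodp_def by auto
qed

lemma W1_adj:
  assumes "a \<in> carrier G" "a' \<in> carrier G" "W a a' = 1"
  shows "W \<one> a \<le> W \<one> a' + 1"
proof -
  have "W \<one> a \<le> W \<one> a' + W a' a" using W_tri assms by simp
  moreover have "W a' a = 1" using assms W_sym by simp
  ultimately show ?thesis by simp
qed

lemma goodp_edge:
  assumes "a \<in> carrier G" "a' \<in> carrier G" "W a a' = 1" "W \<one> a + W \<one> a' + 1 \<le> 2 * n"
  shows "goodp n (\<lambda>i. if i = 0 then a else a') 1"
proof -
  have "W \<one> a \<le> W \<one> a' + 1" using W1_adj assms by simp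
  moreover have "W \<one> a' \<le> W \<one> a + 1" using W1_adj[of a' a] assms W_sym by simp
  ultimately have "W \<one> a \<le> n" "W \<one> a' \<le> n" using assms(4) by linarith+
  then show ?thesis using assms unfolding goodp_def by (auto simp: le_Suc_eq)
qed

lemma goodp_bounds:
  assumes c: "\<forall>i \<le> r. f i \<in> carrier G" and st: "\<forall>i < r. W (f i) (f (Suc i)) = 1"
    and b1: "\<forall>i \<le> r. W \<one> (f i) \<le> A + i" and b2: "\<forall>i \<le> r. W \<one> (f i) + i \<le> B"
    and AB: "A + B \<le> 2 * n"
  shows "goodp n f r"
proof (rule goodpI)
  fix i assume i: "i \<le> r"
  have "W \<one> (f i) \<le> A + i" "W \<one> (f i) + i \<le> B" using b1 b2 i by auto
  then show "f i \<in> carrier G \<and> W \<one> (f i) \<le> n" using c i AB by auto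
next
  fix i assume i: "i < r"
  have "W \<one> (f i) \<le> A + i" using b1 i by auto
  moreover have "W \<one> (f (Suc i)) + Suc i \<le> B" using b2 i by (meson Suc_leI)
  ultimately show "W (f i) (f (Suc i)) = 1 \<and> W \<one> (f i) + W \<one> (f (Suc i)) + 1 \<le> 2 * n" using st i AB by auto
qed

lemma steps_le:
  assumes c: "\<forall>i \<le> r. f i \<in> carrier G" and st: "\<forall>i < r. W (f i) (f (Suc i)) \<le> 1"
  shows "i \<le> j \<Longrightarrow> j \<le> r \<Longrightarrow> W (f i) (f j) \<le> j - i"
proof (induction j)
  case 0 then show ?case using c by simp
next
  case (Suc j)
  show ?case
  proof (cases "i = Suc j")
    case True then show ?thesis using c Suc by simp
  next
    case False
    then have "i \<le> j" using Suc by simp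
    then have "W (f i) (f j) \<le> j - i" using Suc by simp
    moreover have "W (f i) (f (Suc j)) \<le> W (f i) (f j) + W (f j) (f (Suc j))"
      using W_tri c Suc by simp
    moreover have "W (f j) (f (Suc j)) \<le> 1" using st Suc by simp
    ultimately show ?thesis using \<open>i \<le> j\<close> by simp
  qed
qed

lemma geodesic:
  assumes u: "u \<in> carrier G" and v: "v \<in> carrier G"
  shows "\<exists>f. f 0 = u \<and> f (W u v) = v \<and> (\<forall>i \<le> W u v. f i \<in> carrier G) \<and>
             (\<forall>i < W u v. W (f i) (f (Suc i)) = 1)"
proof -
  obtain ss where ss: "set ss \<subseteq> LL" "length ss = W u v" "u \<otimes> wv ss = v"
    using W_wrd[OF u v] unfolding wrd_def by blast
  define f where "f i = u \<otimes> wv (take i ss)" for i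
  have take_sub: "set (take i ss) \<subseteq> LL" for i using ss(1) by (meson order_trans set_take_subset)
  have c: "\<forall>i \<le> W u v. f i \<in> carrier G" unfolding f_def using u wv_closed take_sub by auto
  have f0: "f 0 = u" unfolding f_def using u by simp
  have fr: "f (W u v) = v" unfolding f_def using ss by simp
  have st1: "W (f i) (f (Suc i)) \<le> 1" if i: "i < W u v" for i
  proof -
    have tk: "take (Suc i) ss = take i ss @ [ss ! i]" using i ss(2) by (simp add: take_Suc_conv_app_nth)
    have si: "ss ! i \<in> LL" using ss i by (metis nth_mem subsetD)
    have sic: "ss ! i \<in> carrier G" using si LL_carrier by auto
    have "f (Suc i) = f i \<otimes> wv [ss ! i]" unfolding f_def tk
      using wv_append[OF take_sub[of i], of "[ss ! i]"] si sic u wv_closed[OF take_sub[of i]]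
      by (simp add: m_assoc)
    then have "wrd (f i) (f (Suc i)) 1" unfolding wrd_def using si by (intro exI[of _ "[ss ! i]"]) auto
    then show ?thesis by (rule W_le)
  qed
  have st: "\<forall>i < W u v. W (f i) (f (Suc i)) = 1"
  proof (intro allI impI)
    fix i assume i: "i < W u v"
    show "W (f i) (f (Suc i)) = 1"
    proof (rule ccontr)
      assume "W (f i) (f (Suc i)) \<noteq> 1"
      then have "W (f i) (f (Suc i)) = 0" using st1[OF i] by simp
      then have eq: "f i = f (Suc i)" using W_zero c i by simp
      have "W u (f i) \<le> i" using steps_le[of "W u v" f 0 i] c st1 i f0 by simp
      moreover have "W (f (Suc i)) v \<le> W u v - Suc i" using steps_le[of "W u v" f "Suc i" "W u v"] c st1 i fr by simp
      moreover have "W u v \<le> W u (f i) + W (f i) v" using W_tri c i u v by simp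
      ultimately show False using eq i by simp
    qed
  qed
  show ?thesis using f0 fr c st by blast
qed

lemma goodp_final:
  assumes gp: "goodp n f L"
  shows "cay_edge_path G S (map f [0..<Suc L]) \<and> hd (map f [0..<Suc L]) = f 0 \<and>
         last (map f [0..<Suc L]) = f L \<and> length (map f [0..<Suc L]) - 1 = L \<and>
         cay_path_points G S (map f [0..<Suc L]) \<subseteq> cay_ball G S (real n)"
proof -
  let ?vs = "map f [0..<Suc L]"
  have nth: "?vs ! i = f i" if "i \<le> L" for i using that by (simp del: upt_Suc add: nth_map_upt)
  have one: "\<one> \<in> carrier G" by simp
  have p1: "[\<one> \<mapsto> 0] \<in> cay_points G S" using vtx_pt[OF one] .
  have ep: "cay_edge_path G S ?vs"
    unfolding cay_edge_path_def
  proof (intro conjI allI impI)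
    show "?vs \<noteq> []" by simp
    show "set ?vs \<subseteq> carrier G" using gp unfolding goodp_def by auto
    fix i assume "Suc i < length ?vs"
    then have i: "i < L" by simp
    then show "{?vs ! i, ?vs ! Suc i} \<in> cay_edges G S"
      using nth[of i] nth[of "Suc i"] gp W_one_edge unfolding goodp_def by simp
  qed
  have hd: "hd ?vs = f 0" by (simp del: upt_Suc add: upt_conv_Cons)
  have lst: "last ?vs = f L" by (simp add: last_map)
  have ball: "cay_path_points G S ?vs \<subseteq> cay_ball G S (real n)"
  proof
    fix p assume "p \<in> cay_path_points G S ?vs"
    then have p: "p \<in> cay_points G S" and
      cs: "(\<exists>v \<in> set ?vs. dom p = {v}) \<or> (\<exists>i. Suc i < length ?vs \<and> dom p = {?vs ! i, ?vs ! Suc i})"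
      unfolding cay_path_points_def by auto
    from cs have "cay_dist G S [\<one> \<mapsto> 0] p \<le> real n"
    proof
      assume "\<exists>v \<in> set ?vs. dom p = {v}"
      then obtain i where i: "i \<le> L" "dom p = {f i}" by (auto simp del: upt_Suc) (metis atLeastLessThan_iff less_Suc_eq_le)
      have "cay_dist G S [\<one> \<mapsto> 0] p \<le> 0 + real (W \<one> (f i)) + the (p (f i))"
        using dist_UB[OF p1 p, of \<one> "f i"] i by simp
      moreover have "the (p (f i)) = 0" using pt_basic(6)[OF p] i by simp
      moreover have "W \<one> (f i) \<le> n" using gp i unfolding goodp_def by auto
      ultimately show ?thesis by simp
    next
      assume "\<exists>i. Suc i < length ?vs \<and> dom p = {?vs ! i, ?vs ! Suc i}"
      then obtain i where i: "i < L" "dom p = {f i, f (Suc i)}" using nth by auto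
      have w: "W (f i) (f (Suc i)) = 1" "W \<one> (f i) + W \<one> (f (Suc i)) + 1 \<le> 2 * n"
        "f i \<in> carrier G" using gp i unfolding goodp_def by auto
      have ne: "f i \<noteq> f (Suc i)" using w by auto
      have s: "the (p (f i)) + the (p (f (Suc i))) = 1" using pt_basic(5)[OF p _ _ ne] i by simp
      have d1: "cay_dist G S [\<one> \<mapsto> 0] p \<le> 0 + real (W \<one> (f i)) + the (p (f i))"
        using dist_UB[OF p1 p, of \<one> "f i"] i by simp
      have d2: "cay_dist G S [\<one> \<mapsto> 0] p \<le> 0 + real (W \<one> (f (Suc i))) + the (p (f (Suc i)))"
        using dist_UB[OF p1 p, of \<one> "f (Suc i)"] i by simp
      have "real (W \<one> (f i)) + real (W \<one> (f (Suc i))) + 1 \<le> 2 * real n" using w(2) by linarith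
      then show ?thesis using d1 d2 s by linarith
    qed
    then show "p \<in> cay_ball G S (real n)" unfolding cay_ball_def using p by simp
  qed
  show ?thesis using ep hd lst ball by simp
qed

end

locale side = cay G S for G (structure) and S +
  fixes n :: nat and g :: 'a and y :: "nat \<Rightarrow> 'a" and m :: real
  assumes y0: "y 0 = g" and yc: "\<forall>i \<le> n. y i \<in> carrier G"
    and yW: "\<forall>i \<le> n. W \<one> (y i) = n - i" and ys: "\<forall>i < n. W (y i) (y (Suc i)) = 1"
    and m0: "0 \<le> m" and mn: "m < real n"
begin

definition k where "k = nat \<lfloor>m\<rfloor>"
definition x where "x = (if real k = m then [y k \<mapsto> 0] else [y k \<mapsto> m - real k, y (Suc k) \<mapsto> real k + 1 - m])"

lemma k_props: "real k \<le> m" "m < real k + 1" "k < n" "real k \<noteq> m \<Longrightarrow> Suc k \<le> n"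
proof -
  show a: "real k \<le> m" unfolding k_def using m0 by linarith
  show b: "m < real k + 1" unfolding k_def using m0 by linarith
  have "real k < real n" using a mn by linarith
  then show c: "k < n" by simp
  then show "real k \<noteq> m \<Longrightarrow> Suc k \<le> n" by simp
qed

lemma y_good: "j \<le> n \<Longrightarrow> goodp n y j"
proof (rule goodpI)
  fix i assume "j \<le> n" "i \<le> j"
  then have "i \<le> n" by simp
  then show "y i \<in> carrier G \<and> W \<one> (y i) \<le> n" using yc yW by simp
next
  fix i assume "j \<le> n" "i < j"
  then have i: "i < n" by simp
  then have "W \<one> (y i) = n - i" "W \<one> (y (Suc i)) = n - Suc i" "W (y i) (y (Suc i)) = 1"
    using yW ys by simp_all
  then show "W (y i) (y (Suc i)) = 1 \<and> W \<one> (y i) + W \<one> (y (Suc i)) + 1 \<le> 2 * n" using i by simp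
qed

lemma yk_ne: assumes "Suc k \<le> n" shows "y k \<noteq> y (Suc k)"
proof -
  have "W \<one> (y k) = n - k" "W \<one> (y (Suc k)) = n - Suc k" using yW assms by simp_all
  then show ?thesis using assms by auto
qed

lemma x_pt: "x \<in> cay_points G S"
proof (cases "real k = m")
  case True
  have "y k \<in> carrier G" using yc k_props(3) by simp
  then show ?thesis unfolding x_def using vtx_pt True by simp
next
  case False
  have sk: "Suc k \<le> n" using k_props False by simp
  have e: "{y k, y (Suc k)} \<in> cay_edges G S" using W_one_edge yc ys sk by simp
  have "0 < m - real k" "m - real k < 1" using k_props False by auto
  then have "[y k \<mapsto> m - real k, y (Suc k) \<mapsto> 1 - (m - real k)] \<in> cay_points G S"
    unfolding cay_points_def using e yk_ne[OF sk] by blast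
  moreover have "1 - (m - real k) = real k + 1 - m" by simp
  ultimately show ?thesis unfolding x_def using False by simp
qed

lemma x_anch: "c \<in> dom x \<Longrightarrow> \<exists>j. j \<le> n \<and> c = y j \<and> the (x c) = \<bar>m - real j\<bar> \<and> (j = k \<or> (j = Suc k \<and> real k \<noteq> m))"
proof -
  assume c: "c \<in> dom x"
  show ?thesis
  proof (cases "real k = m")
    case True
    then show ?thesis using c k_props unfolding x_def by (auto intro!: exI[of _ k])
  next
    case False
    have sk: "Suc k \<le> n" using k_props False by simp
    have ne: "y (Suc k) \<noteq> y k" using yk_ne[OF sk] by metis
    have "c = y k \<or> c = y (Suc k)" using c False unfolding x_def by (auto split: if_splits)
    then show ?thesis
    proof
      assume "c = y k" then show ?thesis using False k_props ne unfolding x_def by (auto intro!: exI[of _ k])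
    next
      assume c2: "c = y (Suc k)"
      have "the (x c) = real k + 1 - m" unfolding x_def c2 using False ne by simp
      also have "\<dots> = \<bar>m - real (Suc k)\<bar>" using k_props by simp
      finally show ?thesis using sk c2 False by blast
    qed
  qed
qed

lemma x_k: "y k \<in> dom x" "the (x (y k)) = m - real k"
proof -
  show "y k \<in> dom x" unfolding x_def by auto
  show "the (x (y k)) = m - real k"
  proof (cases "real k = m")
    case True then show ?thesis unfolding x_def by simp
  next
    case False
    then have "y (Suc k) \<noteq> y k" using yk_ne k_props by metis
    then show ?thesis unfolding x_def using False by simp
  qed
qed

lemma x_ne1: "x \<noteq> [\<one> \<mapsto> 0]"
proof
  assume "x = [\<one> \<mapsto> 0]"
  then have "y k = \<one>" using x_k(1) by (auto split: if_splits)
  then have "W \<one> (y k) = 0" by simp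
  moreover have "W \<one> (y k) = n - k" using yW k_props by simp
  ultimately show False using k_props by simp
qed

lemma one_pt: "[\<one> \<mapsto> 0] \<in> cay_points G S" using vtx_pt by simp

lemma d1x: "cay_dist G S [\<one> \<mapsto> 0] x \<le> real n - m"
proof (cases "real k = m")
  case True
  have "cay_dist G S [\<one> \<mapsto> 0] x \<le> 0 + real (W \<one> (y k)) + the (x (y k))"
    using dist_UB[OF one_pt x_pt, of \<one> "y k"] x_k by simp
  then show ?thesis using True yW k_props x_k by simp
next
  case False
  have sk: "Suc k \<le> n" using k_props False by simp
  have h1: "y (Suc k) \<in> dom x" unfolding x_def using False by simp
  have h2: "the (x (y (Suc k))) = real k + 1 - m" unfolding x_def using False yk_ne[OF sk] by auto
  have h3: "\<one> \<in> dom [\<one> \<mapsto> (0::real)]" by simp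
  have "cay_dist G S [\<one> \<mapsto> 0] x \<le> the ([\<one> \<mapsto> (0::real)] \<one>) + real (W \<one> (y (Suc k))) + the (x (y (Suc k)))"
    by (rule dist_UB[OF one_pt x_pt h3 h1])
  then have "cay_dist G S [\<one> \<mapsto> 0] x \<le> real (W \<one> (y (Suc k))) + (real k + 1 - m)" using h2 by simp
  moreover have "real (W \<one> (y (Suc k))) = real n - real k - 1" using yW sk by simp
  ultimately show ?thesis by simp
qed

lemma W1_le_dist:
  assumes t: "t \<in> cay_points G S" and a: "a \<in> dom t"
  shows "real (W \<one> a) \<le> cay_dist G S [\<one> \<mapsto> 0] t + the (t a)"
proof -
  have "\<one> \<in> dom [\<one> \<mapsto> (0::real)]" by simp
  from dist_AN[OF one_pt t this a] show ?thesis by simp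
qed

end

context side begin

lemma side_main:
  assumes t: "t \<in> cay_points G S"
    and T: "cay_dist G S [\<one> \<mapsto> 0] t + cay_dist G S x t \<le> real n + m"
  shows "\<exists>a P l. a \<in> dom t \<and> goodp n P l \<and> P 0 = g \<and> P l = a \<and>
           real l + the (t a) \<le> m + cay_dist G S x t \<and>
           ((dom t = dom x \<and> a = y k) \<or> real (W \<one> a) \<le> real n - m + cay_dist G S x t - the (t a))"
  using dist_MIN[OF x_pt t]
proof
  assume "\<exists>e. dom x = dom t \<and> e \<in> dom x \<and> cay_dist G S x t = \<bar>the (x e) - the (t e)\<bar>"
  then obtain e where e: "dom x = dom t" "e \<in> dom x" "cay_dist G S x t = \<bar>the (x e) - the (t e)\<bar>" by blast
  have ykd: "y k \<in> dom t" using x_k e by simp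
  have eq: "\<bar>the (x e) - the (t e)\<bar> = \<bar>the (x (y k)) - the (t (y k))\<bar>"
  proof (cases "e = y k")
    case True then show ?thesis by simp
  next
    case False
    have "the (x (y k)) + the (x e) = 1" using pt_basic(5)[OF x_pt x_k(1) e(2)] False by simp
    moreover have "the (t (y k)) + the (t e) = 1" using pt_basic(5)[OF t ykd] e False by simp
    ultimately show ?thesis by (smt (verit))
  qed
  have len: "real k + the (t (y k)) \<le> m + cay_dist G S x t"
    using e(3) eq x_k(2) by simp
  have "goodp n y k" using y_good k_props by simp
  moreover have "y k = y k" ..
  ultimately show ?thesis using ykd len e(1) y0 by blast
next
  assume "\<exists>b a. b \<in> dom x \<and> a \<in> dom t \<and> cay_dist G S x t = the (x b) + real (W b a) + the (t a)"
  then obtain b a where ba: "b \<in> dom x" "a \<in> dom t" "cay_dist G S x t = the (x b) + real (W b a) + the (t a)"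
    by blast
  obtain j where j: "j \<le> n" "b = y j" "the (x b) = \<bar>m - real j\<bar>" using x_anch[OF ba(1)] by blast
  have bc: "b \<in> carrier G" using j yc by simp
  have ac: "a \<in> carrier G" using pt_basic(1)[OF t] ba by auto
  define r where "r = W b a"
  obtain z where z: "z 0 = b" "z r = a" "\<forall>i \<le> r. z i \<in> carrier G" "\<forall>i < r. W (z i) (z (Suc i)) = 1"
    using geodesic[OF bc ac] unfolding r_def by blast
  have zst: "\<forall>i < r. W (z i) (z (Suc i)) \<le> 1" using z by simp
  have W1b: "W \<one> b = n - j" using yW j by simp
  have W1a: "real (W \<one> a) \<le> cay_dist G S [\<one> \<mapsto> 0] t + the (t a)" using W1_le_dist[OF t ba(2)] .
  have jm: "real j \<le> m + \<bar>m - real j\<bar>" by simp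
  have nj: "real (n - j) = real n - real j" using j by simp
  have zg: "goodp n z r"
  proof (rule goodp_bounds[where A = "n - j" and B = "W \<one> a + r"])
    show "\<forall>i \<le> r. z i \<in> carrier G" using z by simp
    show "\<forall>i < r. W (z i) (z (Suc i)) = 1" using z by simp
    show "\<forall>i \<le> r. W \<one> (z i) \<le> n - j + i"
    proof (intro allI impI)
      fix i assume i: "i \<le> r"
      have "W (z 0) (z i) \<le> i - 0" using steps_le[OF z(3) zst, of 0 i] i by simp
      moreover have "W \<one> (z i) \<le> W \<one> b + W b (z i)" using W_tri bc z i by simp
      ultimately show "W \<one> (z i) \<le> n - j + i" using z(1) W1b by simp
    qed
    show "\<forall>i \<le> r. W \<one> (z i) + i \<le> W \<one> a + r"
    proof (intro allI impI)
      fix i assume i: "i \<le> r"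
      have zc: "z i \<in> carrier G" using z i by simp
      have "W (z i) (z r) \<le> r - i" using steps_le[OF z(3) zst, of i r] i by simp
      moreover have "W \<one> (z i) \<le> W \<one> a + W a (z i)" using W_tri ac zc by simp
      moreover have "W a (z i) = W (z i) a" using W_sym ac zc by simp
      ultimately show "W \<one> (z i) + i \<le> W \<one> a + r" using z(2) i by simp
    qed
    have "real (n - j) + real (W \<one> a + r) \<le> 2 * real n"
      using nj W1a T ba(3) j(3) jm d1x unfolding r_def by simp
    then show "n - j + (W \<one> a + r) \<le> 2 * n" by linarith
  qed
  have yg: "goodp n y j" using y_good j by simp
  have PG: "goodp n (\<lambda>i. if i \<le> j then y i else z (i - j)) (j + r)"
    using goodp_concat[OF yg zg] z(1) j(2) by simp
  have P0: "(\<lambda>i. if i \<le> j then y i else z (i - j)) 0 = g" using y0 by simp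
  have Pl: "(\<lambda>i. if i \<le> j then y i else z (i - j)) (j + r) = a"
  proof (cases "r = 0")
    case True then show ?thesis using z j by simp
  next
    case False then show ?thesis using z by simp
  qed
  have len: "real (j + r) + the (t a) \<le> m + cay_dist G S x t"
    using ba(3) j(3) jm unfolding r_def by simp
  have "W \<one> a \<le> W \<one> b + W b a" using W_tri bc ac by simp
  then have flag: "real (W \<one> a) \<le> real n - m + cay_dist G S x t - the (t a)"
    using W1b nj ba(3) j(3) jm by simp
  show ?thesis using PG P0 Pl len flag ba(2) by blast
qed

lemma crossing:
  assumes t: "t \<in> cay_points G S" and a: "a \<in> dom t" and a': "a' \<in> dom t" and ne: "a \<noteq> a'"
    and Wa: "W \<one> a \<le> n" and Wa': "W \<one> a' \<le> n"
    and T: "cay_dist G S [\<one> \<mapsto> 0] t + cay_dist G S x t \<le> real n + m"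
    and flag: "(dom t = dom x \<and> a = y k) \<or> real (W \<one> a) \<le> real n - m + cay_dist G S x t - the (t a)"
  shows "W \<one> a + W \<one> a' + 1 \<le> 2 * n"
  using flag
proof
  assume f: "dom t = dom x \<and> a = y k"
  obtain j where j: "j \<le> n" "a' = y j" "j = k \<or> j = Suc k" using x_anch a' f by blast
  have "j = Suc k" using j ne f by auto
  then have "j \<le> n" "W \<one> a' = n - Suc k" "W \<one> a = n - k" using j yW k_props f by simp_all
  then show ?thesis using k_props by simp
next
  assume f: "real (W \<one> a) \<le> real n - m + cay_dist G S x t - the (t a)"
  show ?thesis
  proof (rule ccontr)
    assume "\<not> ?thesis"
    then have n1: "W \<one> a = n" "W \<one> a' = n" using Wa Wa' by auto
    have dt: "dom t = {a, a'}" using pt_basic(5)[OF t a a' ne] by simp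
    have "cay_dist G S [\<one> \<mapsto> 0] t > real n"
      using dist_MIN[OF one_pt t]
    proof
      assume "\<exists>e. dom [\<one> \<mapsto> (0::real)] = dom t \<and> e \<in> dom [\<one> \<mapsto> (0::real)] \<and>
                 cay_dist G S [\<one> \<mapsto> 0] t = \<bar>the ([\<one> \<mapsto> (0::real)] e) - the (t e)\<bar>"
      then have "dom t = {\<one>}" by auto
      then have "a = \<one>" "a' = \<one>" using a a' by blast+
      then show ?thesis using ne by simp
    next
      assume "\<exists>e c. e \<in> dom [\<one> \<mapsto> (0::real)] \<and> c \<in> dom t \<and>
                 cay_dist G S [\<one> \<mapsto> 0] t = the ([\<one> \<mapsto> (0::real)] e) + real (W e c) + the (t c)"
      then obtain e c where ec: "e \<in> dom [\<one> \<mapsto> (0::real)]" "c \<in> dom t"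
        "cay_dist G S [\<one> \<mapsto> 0] t = the ([\<one> \<mapsto> (0::real)] e) + real (W e c) + the (t c)" by blast
      have "e = \<one>" using ec(1) by simp
      then have c: "c \<in> dom t" "cay_dist G S [\<one> \<mapsto> 0] t = real (W \<one> c) + the (t c)" using ec by simp_all
      have "c = a \<or> c = a'" using c dt by auto
      moreover have "the (t a) > 0" using pt_pos[OF t a a' ne] .
      moreover have "the (t a') > 0" using pt_pos[OF t a' a] ne by simp
      ultimately show ?thesis using c n1 by (metis add_strict_left_mono add.right_neutral)
    qed
    moreover have "the (t a) \<ge> 0" using pt_basic(4)[OF t a] .
    ultimately show False using f T n1 by simp
  qed
qed

end

context cay begin

lemma assemble:
  assumes P: "goodp n P l" "P 0 = g" "P l = a" and Q: "goodp n Q l'" "Q 0 = g'" "Q l' = a'"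
    and J: "a = a' \<or> (W a a' = 1 \<and> W \<one> a + W \<one> a' + 1 \<le> 2 * n)"
    and B: "real l + real l' + (if a = a' then 0 else 1) \<le> Bd"
  shows "\<exists>vs. cay_edge_path G S vs \<and> hd vs = g \<and> last vs = g' \<and> real (length vs - 1) \<le> Bd
              \<and> cay_path_points G S vs \<subseteq> cay_ball G S (real n)"
proof -
  have Qr: "goodp n (\<lambda>i. Q (l' - i)) l'" using goodp_rev[OF Q(1)] .
  have "\<exists>f L. goodp n f L \<and> f 0 = g \<and> f L = g' \<and> real L \<le> Bd"
  proof (cases "a = a'")
    case True
    define f where "f = (\<lambda>i. if i \<le> l then P i else Q (l' - (i - l)))"
    have "goodp n f (l + l')" unfolding f_def using goodp_concat[OF P(1) Qr] P(3) Q(3) True by simp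
    moreover have "f 0 = g" unfolding f_def using P by simp
    moreover have "f (l + l') = g'"
    proof (cases "l' = 0")
      case True then show ?thesis unfolding f_def using P Q \<open>a = a'\<close> by simp
    next
      case False then show ?thesis unfolding f_def using Q by simp
    qed
    moreover have "real (l + l') \<le> Bd" using B True by simp
    ultimately show ?thesis by blast
  next
    case False
    then have J': "W a a' = 1" "W \<one> a + W \<one> a' + 1 \<le> 2 * n" using J by auto
    have ac: "a \<in> carrier G" "a' \<in> carrier G" using P Q unfolding goodp_def by auto
    have E: "goodp n (\<lambda>i. if i = 0 then a else a') 1" using goodp_edge[OF ac J'] .
    define h where "h = (\<lambda>i. if i \<le> l then P i else (\<lambda>i. if i = 0 then a else a') (i - l))"
    have hg: "goodp n h (l + 1)" unfolding h_def using goodp_concat[OF P(1) E] P(3) by simp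
    have h1: "h (l + 1) = a'" unfolding h_def by simp
    define f where "f = (\<lambda>i. if i \<le> l + 1 then h i else Q (l' - (i - (l + 1))))"
    have "goodp n f (l + 1 + l')" unfolding f_def using goodp_concat[OF hg Qr] h1 Q(3) by simp
    moreover have "f 0 = g" unfolding f_def h_def using P by simp
    moreover have "f (l + 1 + l') = g'"
    proof (cases "l' = 0")
      case True then show ?thesis unfolding f_def using h1 Q by simp
    next
      case False then show ?thesis unfolding f_def using Q by simp
    qed
    moreover have "real (l + 1 + l') \<le> Bd" using B False by simp
    ultimately show ?thesis by blast
  qed
  then obtain f L where f: "goodp n f L" "f 0 = g" "f L = g'" "real L \<le> Bd" by blast
  show ?thesis using goodp_final[OF f(1)] f by (intro exI[of _ "map f [0..<Suc L]"]) simp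
qed

lemma geo_to_one:
  assumes g: "g \<in> carrier G" and n: "W \<one> g = n"
  shows "\<exists>y. y 0 = g \<and> (\<forall>i \<le> n. y i \<in> carrier G) \<and> (\<forall>i \<le> n. W \<one> (y i) = n - i) \<and>
             (\<forall>i < n. W (y i) (y (Suc i)) = 1) \<and> y n = \<one>"
proof -
  have one: "\<one> \<in> carrier G" by simp
  have wn: "W g \<one> = n" using W_sym[OF g one] n by simp
  obtain y where y: "y 0 = g" "y n = \<one>" "\<forall>i \<le> n. y i \<in> carrier G" "\<forall>i < n. W (y i) (y (Suc i)) = 1"
    using geodesic[OF g one] wn by metis
  have yst: "\<forall>i < n. W (y i) (y (Suc i)) \<le> 1" using y by simp
  have "\<forall>i \<le> n. W \<one> (y i) = n - i"
  proof (intro allI impI)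
    fix i assume i: "i \<le> n"
    have yc: "y i \<in> carrier G" using y i by simp
    have a: "W (y i) (y n) \<le> n - i" using steps_le[OF y(3) yst, of i n] i by simp
    have b: "W (y 0) (y i) \<le> i - 0" using steps_le[OF y(3) yst, of 0 i] i by simp
    have c: "W g \<one> \<le> W g (y i) + W (y i) \<one>" using W_tri g yc one by simp
    have "W \<one> (y i) = W (y i) \<one>" using W_sym yc one by simp
    then show "W \<one> (y i) = n - i" using a b c y wn by simp
  qed
  then show ?thesis using y by blast
qed

lemma geo_good:
  assumes "\<forall>i \<le> n. y i \<in> carrier G" "\<forall>i \<le> n. W \<one> (y i) = n - i" "\<forall>i < n. W (y i) (y (Suc i)) = 1"
  shows "goodp n y n"
proof (rule goodpI)
  fix i assume "i \<le> n"
  then show "y i \<in> carrier G \<and> W \<one> (y i) \<le> n" using assms by simp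
next
  fix i assume i: "i < n"
  then have "W \<one> (y i) = n - i" "W \<one> (y (Suc i)) = n - Suc i" "W (y i) (y (Suc i)) = 1"
    using assms by simp_all
  then show "W (y i) (y (Suc i)) = 1 \<and> W \<one> (y i) + W \<one> (y (Suc i)) + 1 \<le> 2 * n" using i by simp
qed

end

theorem theorem2p1:
  fixes G (structure) and S :: "'a set" and \<delta> :: real
  assumes "group G" and "S \<subseteq> carrier G" and "finite S" and "generate G S = carrier G"
    and "\<delta> \<ge> 0" and "property_L G S \<delta>"
  shows "\<forall>(n::nat) g g'. g \<in> carrier G \<and> g' \<in> carrier G
           \<and> cay_vdist G S \<one> g = real n \<and> cay_vdist G S \<one> g' = real n
           \<and> cay_vdist G S g g' \<le> 2 \<longrightarrow>
           (\<exists>vs. cay_edge_path G S vs \<and> hd vs = g \<and> last vs = g'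
              \<and> real (length vs - 1) \<le> 3 * \<delta> + 2
              \<and> cay_path_points G S vs \<subseteq> cay_ball G S (real n))"
proof (intro allI impI, elim conjE)
  interpret C: cay G S using assms(1,2,4) by (simp add: cay_def cay_axioms_def)
  fix n :: nat and g g'
  assume g: "g \<in> carrier G" and g': "g' \<in> carrier G" and dg: "cay_vdist G S \<one> g = real n"
    and dg': "cay_vdist G S \<one> g' = real n" and dgg: "cay_vdist G S g g' \<le> 2"
  have one: "\<one> \<in> carrier G" by simp
  have Wg: "C.W \<one> g = n" using dg C.vdist_W by simp
  have Wg': "C.W \<one> g' = n" using dg' C.vdist_W by simp
  have Wgg: "C.W g g' \<le> 2" using dgg C.vdist_W by simp
  obtain y where y: "y 0 = g" "\<forall>i \<le> n. y i \<in> carrier G" "\<forall>i \<le> n. C.W \<one> (y i) = n - i"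
    "\<forall>i < n. C.W (y i) (y (Suc i)) = 1" "y n = \<one>" using C.geo_to_one[OF g Wg] by blast
  obtain y' where y': "y' 0 = g'" "\<forall>i \<le> n. y' i \<in> carrier G" "\<forall>i \<le> n. C.W \<one> (y' i) = n - i"
    "\<forall>i < n. C.W (y' i) (y' (Suc i)) = 1" "y' n = \<one>" using C.geo_to_one[OF g' Wg'] by blast
  define m where "m = \<delta> / 2"
  have m0: "0 \<le> m" using assms(5) unfolding m_def by simp
  show "\<exists>vs. cay_edge_path G S vs \<and> hd vs = g \<and> last vs = g'
              \<and> real (length vs - 1) \<le> 3 * \<delta> + 2
              \<and> cay_path_points G S vs \<subseteq> cay_ball G S (real n)"
  proof (cases "real n \<le> m")
    case True
    have "real n + real n + 0 \<le> 3 * \<delta> + 2" using True assms(5) unfolding m_def by simp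
    then show ?thesis
      using C.assemble[OF C.geo_good[OF y(2,3,4)] y(1) y(5) C.geo_good[OF y'(2,3,4)] y'(1) y'(5), of "3 * \<delta> + 2"]
        y(5) y'(5) by simp
  next
    case False
    then have mn: "m < real n" by simp
    interpret A: side G S n g y m using y m0 mn by unfold_locales simp_all
    interpret B: side G S n g' y' m using y' m0 mn by unfold_locales simp_all
    have kk: "B.k = A.k" unfolding A.k_def B.k_def ..
    have ystA: "\<forall>i < n. C.W (y i) (y (Suc i)) \<le> 1" using y by simp
    have ystB: "\<forall>i < n. C.W (y' i) (y' (Suc i)) \<le> 1" using y' by simp
    have kn: "A.k \<le> n" using A.k_props by simp
    have w1: "C.W (y 0) (y A.k) \<le> A.k - 0" using C.steps_le[OF y(2) ystA, of 0 "A.k"] kn by simp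
    have w2: "C.W (y' 0) (y' A.k) \<le> A.k - 0" using C.steps_le[OF y'(2) ystB, of 0 "A.k"] kn by simp
    have yk: "y A.k \<in> carrier G" "y' A.k \<in> carrier G" using y y' kn by simp_all
    have "C.W (y A.k) (y' A.k) \<le> C.W (y A.k) g + C.W g (y' A.k)" using C.W_tri yk g by simp
    moreover have "C.W g (y' A.k) \<le> C.W g g' + C.W g' (y' A.k)" using C.W_tri yk g g' by simp
    moreover have "C.W (y A.k) g = C.W g (y A.k)" using C.W_sym yk g by simp
    ultimately have wyy: "C.W (y A.k) (y' A.k) \<le> 2 * A.k + 2" using w1 w2 Wgg y y' by simp
    have dxx: "cay_dist G S A.x B.x \<le> 2 * m + 2"
    proof -
      have "cay_dist G S A.x B.x \<le> the (A.x (y A.k)) + real (C.W (y A.k) (y' A.k)) + the (B.x (y' A.k))"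
        using C.dist_UB[OF A.x_pt B.x_pt A.x_k(1)] B.x_k(1) kk by simp
      also have "\<dots> \<le> (m - real A.k) + (2 * real A.k + 2) + (m - real A.k)"
        using A.x_k(2) B.x_k(2) kk wyy by simp
      finally show ?thesis using m0 by simp
    qed
    have "\<exists>t \<in> cay_points G S. cay_dist G S [\<one> \<mapsto> 0] t + cay_dist G S A.x t \<le> real n + m \<and>
            cay_dist G S [\<one> \<mapsto> 0] t + cay_dist G S B.x t \<le> real n + m \<and>
            cay_dist G S A.x t + cay_dist G S B.x t \<le> 4 * m + 2"
    proof (cases "A.x = B.x")
      case True
      have "cay_dist G S A.x A.x = 0" using C.dist_self[OF A.x_pt] .
      moreover have "cay_dist G S [\<one> \<mapsto> 0] A.x \<le> real n - m" using A.d1x .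
      ultimately show ?thesis using A.x_pt True m0 by (intro bexI[of _ A.x]) auto
    next
      case False
      have ne1: "[\<one> \<mapsto> 0] \<noteq> A.x" "[\<one> \<mapsto> 0] \<noteq> B.x" using A.x_ne1 B.x_ne1 by metis+
      obtain t where t: "t \<in> cay_points G S"
        "delta_path3 G S \<delta> [\<one> \<mapsto> 0] t A.x" "delta_path3 G S \<delta> A.x t B.x" "delta_path3 G S \<delta> B.x t [\<one> \<mapsto> 0]"
        using assms(6) A.one_pt A.x_pt B.x_pt ne1 False unfolding property_L_def by blast
      have s1: "cay_dist G S t A.x = cay_dist G S A.x t" using C.dist_sym[OF t(1) A.x_pt] .
      have s2: "cay_dist G S t B.x = cay_dist G S B.x t" using C.dist_sym[OF t(1) B.x_pt] .
      have s3: "cay_dist G S t [\<one> \<mapsto> 0] = cay_dist G S [\<one> \<mapsto> 0] t" using C.dist_sym[OF t(1) A.one_pt] .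
      have s4: "cay_dist G S B.x [\<one> \<mapsto> 0] = cay_dist G S [\<one> \<mapsto> 0] B.x" using C.dist_sym[OF B.x_pt A.one_pt] .
      show ?thesis using t s1 s2 s3 s4 A.d1x B.d1x dxx unfolding delta_path3_def m_def
        by (intro bexI[of _ t]) auto
    qed
    then obtain t where t: "t \<in> cay_points G S"
      "cay_dist G S [\<one> \<mapsto> 0] t + cay_dist G S A.x t \<le> real n + m"
      "cay_dist G S [\<one> \<mapsto> 0] t + cay_dist G S B.x t \<le> real n + m"
      "cay_dist G S A.x t + cay_dist G S B.x t \<le> 4 * m + 2" by blast
    obtain a P l where P: "a \<in> dom t" "C.goodp n P l" "P 0 = g" "P l = a"
      "real l + the (t a) \<le> m + cay_dist G S A.x t"
      "(dom t = dom A.x \<and> a = y A.k) \<or> real (C.W \<one> a) \<le> real n - m + cay_dist G S A.x t - the (t a)"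
      using A.side_main[OF t(1,2)] by blast
    obtain a' Q l' where Q: "a' \<in> dom t" "C.goodp n Q l'" "Q 0 = g'" "Q l' = a'"
      "real l' + the (t a') \<le> m + cay_dist G S B.x t"
      using B.side_main[OF t(1,3)] by blast
    have ta: "the (t a) \<ge> 0" "the (t a') \<ge> 0" using C.pt_basic(4)[OF t(1)] P(1) Q(1) by auto
    show ?thesis
    proof (cases "a = a'")
      case True
      have "real l + real l' + (if a = a' then 0 else 1) \<le> 3 * \<delta> + 2"
        using True P(5) Q(5) t(4) ta unfolding m_def by simp
      then show ?thesis using C.assemble[OF P(2,3,4) Q(2,3,4)] True by blast
    next
      case False
      have h: "C.W a a' = 1 \<and> the (t a) + the (t a') = 1" using C.pt_basic(5)[OF t(1) P(1) Q(1) False] by simp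
      have la: "C.W \<one> a \<le> n" using P(2,4) unfolding C.goodp_def by auto
      have la': "C.W \<one> a' \<le> n" using Q(2,4) unfolding C.goodp_def by auto
      have cr: "C.W \<one> a + C.W \<one> a' + 1 \<le> 2 * n"
        using A.crossing[OF t(1) P(1) Q(1) False la la' t(2) P(6)] .
      have "real l + real l' + (if a = a' then 0 else 1) \<le> 3 * \<delta> + 2"
        using False P(5) Q(5) t(4) h unfolding m_def by simp
      then show ?thesis using C.assemble[OF P(2,3,4) Q(2,3,4)] h cr by blast
    qed
  qed
qed


end
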